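(* If $\mathbb E[\xi]\in(0,\infty)$ and $\mathbb E[\nu^2]<\infty$, then there exists a constant $c>0$ such that $\mathbb E[C_n]\ge c/n$ for all $n\ge1$.
   Context: Let $\mathbf p=(p_k)_{k\ge0}$ be a probability distribution on the nonnegative integers with $p_0=0$ and finite mean $m=\sum_k kp_k>1$. Let $\mathbb T$ be a Galton–Watson tree with offspring distribution $\mathbf p$, rooted at $\varnothing$, and $\nu$ the number of children of the root. For a vertex $x$, $|x|$ is its depth and $\overleftarrow{x}$ its parent; $\mathbb T_n=\{x\in\mathbb T:|x|=n\}$; the edge $e=\{\overleftarrow x,x\}$ has depth $d(e)=|x|$. Let $\xi$ be a strictly positive random variable; conditionally on $\mathbb T$, $\{\xi(e)\}$ are i.i.d. copies of $\xi$ and edge $e$ gets resistance $r(e)=m^{d(e)}\xi(e)$. $C_n$ is the effective conductance between $\varnothing$ and $\mathbb T_n$. *)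

theory Defs
  imports "HOL-Probability.Probability"
begin

text \<open>Galton-Watson tree in Ulam-Harris labelling: vertices are lists of naturals,
  N u is the number of children of label u; the root is the empty list and
  u @ [i] is in the tree iff u is and i < N u.\<close>
definition gw_tree :: "(nat list \<Rightarrow> nat) \<Rightarrow> nat list set" where
  "gw_tree N = {u. \<forall>k<length u. u ! k < N (take k u)}"

text \<open>Effective conductance between the root and level n (Dirichlet principle),
  in the network formed by the vertices of depth at most n; the edge from
  butlast u to u has resistance r u.\<close>
definition eff_conductance ::
  "(nat list \<Rightarrow> nat) \<Rightarrow> (nat list \<Rightarrow> real) \<Rightarrow> nat \<Rightarrow> real" where
  "eff_conductance N r n =
     (INF f \<in> {f :: nat list \<Rightarrow> real. f [] = 1 \<and> (\<forall>u\<in>gw_tree N. length u = n \<longrightarrow> f u = 0)}.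
        \<Sum>u\<in>{u\<in>gw_tree N. 1 \<le> length u \<and> length u \<le> n}. (f u - f (butlast u))^2 / r u)"

text \<open>Sample space: for every label u, an independent pair (number of children of u,
  weight xi of the edge leading into u), distributed as p \<times> X.\<close>
definition gw_space :: "nat pmf \<Rightarrow> real measure \<Rightarrow> (nat list \<Rightarrow> nat \<times> real) measure" where
  "gw_space p X = (\<Pi>\<^sub>M u\<in>UNIV. (measure_pmf p \<Otimes>\<^sub>M X))"

definition offspring_mean :: "nat pmf \<Rightarrow> real" where
  "offspring_mean p = measure_pmf.expectation p real"

definition gw_conductance :: "nat pmf \<Rightarrow> nat \<Rightarrow> (nat list \<Rightarrow> nat \<times> real) \<Rightarrow> real" where
  "gw_conductance p n \<omega> =
     eff_conductance (\<lambda>u. fst (\<omega> u)) (\<lambda>u. offspring_mean p ^ length u * snd (\<omega> u)) n"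

end

theory Submission
  imports Defs
begin


definition LL :: "nat \<Rightarrow> nat \<Rightarrow> nat list set" where
  "LL K n = {xs. set xs \<subseteq> {..<K} \<and> length xs = n}"

definition indN :: "(nat list \<Rightarrow> nat) \<Rightarrow> nat list \<Rightarrow> real" where
  "indN N w = (\<Prod>i<length w. if w!i < N (take i w) then 1 else 0)"

definition Zu :: "(nat list \<Rightarrow> nat) \<Rightarrow> nat \<Rightarrow> nat \<Rightarrow> nat list \<Rightarrow> real" where
  "Zu N K n u = (\<Sum>w\<in>{w\<in>LL K n. take (length u) w = u}. indN N w)"

definition Zt :: "(nat list \<Rightarrow> nat) \<Rightarrow> nat \<Rightarrow> nat \<Rightarrow> real" where
  "Zt N K n = (\<Sum>w\<in>LL K n. indN N w)"

definition Wt :: "(nat list \<Rightarrow> nat) \<Rightarrow> (nat list \<Rightarrow> real) \<Rightarrow> real \<Rightarrow> nat \<Rightarrow> nat \<Rightarrow> real" where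
  "Wt N xi m K n = (\<Sum>k\<in>{1..n}. m^k * (\<Sum>vw\<in>{(v,w)\<in>LL K n \<times> LL K n. take k v = take k w}.
      xi (take k (fst vw)) * indN N (fst vw) * indN N (snd vw)))"

lemma finite_LL[simp]: "finite (LL K n)"
  unfolding LL_def by (rule finite_lists_length_eq) simp

lemma indN_tree: "indN N w = (if w \<in> gw_tree N then 1 else 0)"
proof (cases "w \<in> gw_tree N")
  case True then show ?thesis unfolding indN_def gw_tree_def by (auto intro!: prod.neutral)
next
  case False
  then obtain k where k: "k < length w" "\<not> w!k < N (take k w)" unfolding gw_tree_def by auto
  then show ?thesis using False unfolding indN_def by (intro trans[OF prod_zero]) auto
qed

lemma indN_01: "indN N w = 0 \<or> indN N w = 1" by (simp add: indN_tree)
lemma indN_nonneg: "0 \<le> indN N w" by (simp add: indN_tree)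

lemma take_tree: "w \<in> gw_tree N \<Longrightarrow> take k w \<in> gw_tree N"
  unfolding gw_tree_def by (auto simp: min_def)

lemma finite_levels: "finite {u\<in>gw_tree N. length u \<le> n}"
proof (induction n)
  case 0
  have "{u\<in>gw_tree N. length u \<le> 0} \<subseteq> {[]}" by auto
  then show ?case using finite_subset by blast
next
  case (Suc n)
  let ?A = "{u\<in>gw_tree N. length u \<le> n}"
  have "{u\<in>gw_tree N. length u \<le> Suc n} \<subseteq> ?A \<union> (\<lambda>(u,i). u @ [i]) ` (Sigma ?A (\<lambda>u. {..<N u}))"
  proof
    fix u assume u: "u \<in> {u\<in>gw_tree N. length u \<le> Suc n}"
    show "u \<in> ?A \<union> (\<lambda>(u,i). u @ [i]) ` (Sigma ?A (\<lambda>u. {..<N u}))"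
    proof (cases "length u = Suc n")
      case True
      then have ne: "u \<noteq> []" by auto
      have bt: "butlast u = take n u" using True by (simp add: butlast_conv_take)
      have "butlast u \<in> gw_tree N" using u bt take_tree by auto
      moreover have "last u < N (butlast u)"
      proof -
        have "u ! n < N (take n u)" using u True unfolding gw_tree_def by auto
        then show ?thesis using True bt by (simp add: last_conv_nth ne)
      qed
      moreover have "u = butlast u @ [last u]" using ne by simp
      ultimately show ?thesis using True by (auto intro!: image_eqI[where x="(butlast u, last u)"])
    qed (use u in auto)
  qed
  moreover have "finite (?A \<union> (\<lambda>(u,i). u @ [i]) ` (Sigma ?A (\<lambda>u. {..<N u})))"
    using Suc by auto
  ultimately show ?case by (rule finite_subset)
qed

lemma telesc: "(\<Sum>k\<in>{1..(n::nat)}. (g (k - 1) - g k)) = (g 0 - g n :: real)"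
  by (induction n) (auto simp: sum.cl_ivl_Suc)

lemma Zu_zero: "u \<notin> gw_tree N \<Longrightarrow> length u \<le> n \<Longrightarrow> Zu N K n u = 0"
  unfolding Zu_def
proof (intro sum.neutral ballI)
  fix w assume u: "u \<notin> gw_tree N" and w: "w \<in> {w \<in> LL K n. take (length u) w = u}"
  have "w \<notin> gw_tree N" using take_tree[of w N "length u"] w u by auto
  then show "indN N w = 0" by (simp add: indN_tree)
qed

lemma LL_take: "v \<in> LL K n \<Longrightarrow> k \<le> n \<Longrightarrow> take k v \<in> LL K k"
  unfolding LL_def using set_take_subset[of k v] by auto

definition EE :: "nat \<Rightarrow> nat \<Rightarrow> nat list set" where
  "EE K n = {u. set u \<subseteq> {..<K} \<and> 1 \<le> length u \<and> length u \<le> n}"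

lemma finite_EE[simp]: "finite (EE K n)"
proof -
  have "EE K n \<subseteq> (\<Union>k\<le>n. LL K k)" unfolding EE_def LL_def by auto
  moreover have "finite (\<Union>k\<le>n. LL K k)" by auto
  ultimately show ?thesis by (rule finite_subset)
qed

lemma sum_EE: "(\<Sum>u\<in>EE K n. F u) = (\<Sum>k\<in>{1..n}. \<Sum>u\<in>LL K k. F u)"
proof -
  have "(\<Sum>k\<in>{1..n}. \<Sum>u\<in>{u\<in>EE K n. length u = k}. F u) = (\<Sum>u\<in>EE K n. F u)"
    by (rule sum.group[OF finite_EE]) (auto simp: EE_def)
  moreover have "\<And>k. k \<in> {1..n} \<Longrightarrow> {u\<in>EE K n. length u = k} = LL K k"
    by (auto simp: EE_def LL_def)
  ultimately show ?thesis by simp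
qed

lemma Zt_eq:
  assumes f0: "f [] = 1" and fn: "\<forall>u\<in>gw_tree N. length u = n \<longrightarrow> f u = 0"
  shows "Zt N K n = (\<Sum>u\<in>EE K n. (f (butlast u) - f u) * Zu N K n u)"
proof -
  let ?d = "\<lambda>u. f (butlast u) - f u"
  have 1: "indN N w = indN N w * (\<Sum>k\<in>{1..n}. ?d (take k w))" if w: "w \<in> LL K n" for w
  proof (cases "w \<in> gw_tree N")
    case True
    have lw: "length w = n" using w by (simp add: LL_def)
    have "(\<Sum>k\<in>{1..n}. ?d (take k w)) = (\<Sum>k\<in>{1..n}. f (take (k - 1) w) - f (take k w))"
      using lw by (intro sum.cong) (auto simp: butlast_take)
    also have "\<dots> = f (take 0 w) - f (take n w)" by (rule telesc)
    also have "\<dots> = 1" using f0 fn True lw by simp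
    finally show ?thesis by simp
  qed (simp add: indN_tree)
  have "Zt N K n = (\<Sum>w\<in>LL K n. \<Sum>k\<in>{1..n}. indN N w * ?d (take k w))"
  proof -
    have "Zt N K n = (\<Sum>w\<in>LL K n. indN N w * (\<Sum>k\<in>{1..n}. ?d (take k w)))"
      unfolding Zt_def by (rule sum.cong[OF refl]) (rule 1)
    then show ?thesis by (simp add: sum_distrib_left)
  qed
  also have "\<dots> = (\<Sum>k\<in>{1..n}. \<Sum>w\<in>LL K n. indN N w * ?d (take k w))"
    by (rule sum.swap)
  also have "\<dots> = (\<Sum>k\<in>{1..n}. \<Sum>u\<in>LL K k. ?d u * Zu N K n u)"
  proof (rule sum.cong[OF refl])
    fix k assume k: "k \<in> {1..n}"
    have "(\<Sum>u\<in>LL K k. \<Sum>w\<in>{w\<in>LL K n. take k w = u}. indN N w * ?d (take k w))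
        = (\<Sum>w\<in>LL K n. indN N w * ?d (take k w))"
      by (rule sum.group) (use k LL_take in auto)
    moreover have "(\<Sum>w\<in>{w\<in>LL K n. take k w = u}. indN N w * ?d (take k w)) = ?d u * Zu N K n u"
      if u: "u \<in> LL K k" for u
    proof -
      have lu: "length u = k" using u by (simp add: LL_def)
      show ?thesis unfolding Zu_def lu sum_distrib_left
        by (intro sum.cong) auto
    qed
    ultimately show "(\<Sum>w\<in>LL K n. indN N w * ?d (take k w)) = (\<Sum>u\<in>LL K k. ?d u * Zu N K n u)"
      by simp
  qed
  also have "\<dots> = (\<Sum>u\<in>EE K n. ?d u * Zu N K n u)" by (simp add: sum_EE)
  finally show ?thesis .
qed

lemma Wt_eq:
  "Wt N xi m K n = (\<Sum>u\<in>EE K n. (Zu N K n u)^2 * (m ^ length u * xi u))"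
proof -
  have "(\<Sum>u\<in>EE K n. (Zu N K n u)^2 * (m ^ length u * xi u)) =
     (\<Sum>k\<in>{1..n}. \<Sum>u\<in>LL K k. (Zu N K n u)^2 * (m ^ length u * xi u))" by (simp add: sum_EE)
  also have "\<dots> = (\<Sum>k\<in>{1..n}. m^k * (\<Sum>vw\<in>{(v,w)\<in>LL K n \<times> LL K n. take k v = take k w}.
      xi (take k (fst vw)) * indN N (fst vw) * indN N (snd vw)))"
  proof (rule sum.cong[OF refl])
    fix k assume k: "k \<in> {1..n}"
    let ?P = "{(v,w)\<in>LL K n \<times> LL K n. take k v = take k w}"
    let ?F = "\<lambda>vw. xi (take k (fst vw)) * indN N (fst vw) * indN N (snd vw)"
    have "(\<Sum>u\<in>LL K k. \<Sum>vw\<in>{vw\<in>?P. take k (fst vw) = u}. ?F vw) = (\<Sum>vw\<in>?P. ?F vw)"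
      by (rule sum.group) (use k LL_take in \<open>auto intro: finite_subset[of _ "LL K n \<times> LL K n"]\<close>)
    moreover have "(\<Sum>vw\<in>{vw\<in>?P. take k (fst vw) = u}. ?F vw) = xi u * (Zu N K n u)^2"
      if u: "u \<in> LL K k" for u
    proof -
      have lu: "length u = k" using u by (simp add: LL_def)
      let ?S = "{w\<in>LL K n. take k w = u}"
      have "{vw\<in>?P. take k (fst vw) = u} = ?S \<times> ?S" by auto
      then have "(\<Sum>vw\<in>{vw\<in>?P. take k (fst vw) = u}. ?F vw) = (\<Sum>vw\<in>?S \<times> ?S. ?F vw)" by simp
      also have "\<dots> = (\<Sum>(v,w)\<in>?S \<times> ?S. xi u * indN N v * indN N w)"
        by (intro sum.cong) auto
      also have "\<dots> = (\<Sum>v\<in>?S. \<Sum>w\<in>?S. xi u * indN N v * indN N w)"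
        by (rule sum.cartesian_product[symmetric])
      also have "\<dots> = xi u * ((\<Sum>v\<in>?S. indN N v) * (\<Sum>w\<in>?S. indN N w))"
      proof -
        have "\<And>v. (\<Sum>w\<in>?S. xi u * indN N v * indN N w) = xi u * indN N v * (\<Sum>w\<in>?S. indN N w)"
          by (simp add: sum_distrib_left)
        then have "(\<Sum>v\<in>?S. \<Sum>w\<in>?S. xi u * indN N v * indN N w) = (\<Sum>v\<in>?S. xi u * indN N v) * (\<Sum>w\<in>?S. indN N w)"
          by (simp add: sum_distrib_right)
        then show ?thesis by (simp add: sum_distrib_left[symmetric] mult.assoc)
      qed
      finally show ?thesis unfolding Zu_def lu by (simp add: power2_eq_square mult.assoc)
    qed
    ultimately have "(\<Sum>vw\<in>?P. ?F vw) = (\<Sum>u\<in>LL K k. xi u * (Zu N K n u)^2)" by simp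
    moreover have "(\<Sum>u\<in>LL K k. (Zu N K n u)^2 * (m ^ length u * xi u)) = m^k * (\<Sum>u\<in>LL K k. xi u * (Zu N K n u)^2)"
      by (auto simp: sum_distrib_left LL_def intro!: sum.cong)
    ultimately show "(\<Sum>u\<in>LL K k. (Zu N K n u)^2 * (m ^ length u * xi u)) = m^k * (\<Sum>vw\<in>?P. ?F vw)"
      by simp
  qed
  finally show ?thesis unfolding Wt_def by simp
qed

lemma det_bound:
  assumes xi: "\<And>u. 0 < xi u" and m: "0 < m" and f0: "f [] = 1"
    and fn: "\<forall>u\<in>gw_tree N. length u = n \<longrightarrow> f u = 0"
  shows "(Zt N K n)^2 \<le> (\<Sum>u\<in>{u\<in>gw_tree N. 1 \<le> length u \<and> length u \<le> n}.
            (f u - f (butlast u))^2 / (m^length u * xi u)) * Wt N xi m K n"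
proof -
  define r where "r u = m^length u * xi u" for u
  have r: "0 < r u" for u using xi m by (simp add: r_def)
  let ?d = "\<lambda>u. f (butlast u) - f u"
  let ?A = "EE K n \<inter> gw_tree N"
  let ?E = "{u\<in>gw_tree N. 1 \<le> length u \<and> length u \<le> n}"
  have fA: "finite ?A" by simp
  have fE: "finite ?E" by (rule finite_subset[OF _ finite_levels[of N n]]) auto
  have "Zt N K n = (\<Sum>u\<in>EE K n. ?d u * Zu N K n u)" by (rule Zt_eq[OF f0 fn])
  also have "\<dots> = (\<Sum>u\<in>?A. ?d u * Zu N K n u)"
    by (rule sum.mono_neutral_right[OF finite_EE]) (auto simp: Zu_zero EE_def)
  also have "\<dots> = (\<Sum>u\<in>?A. (?d u / sqrt (r u)) * (Zu N K n u * sqrt (r u)))"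
  proof (intro sum.cong refl)
    fix u have "sqrt (r u) > 0" using r by simp
    then show "?d u * Zu N K n u = (?d u / sqrt (r u)) * (Zu N K n u * sqrt (r u))"
      by (simp add: field_simps)
  qed
  finally have "(Zt N K n)^2 \<le> (\<Sum>u\<in>?A. (?d u / sqrt (r u))^2) * (\<Sum>u\<in>?A. (Zu N K n u * sqrt (r u))^2)"
    using Cauchy_Schwarz_ineq_sum by metis
  also have "\<dots> = (\<Sum>u\<in>?A. (f u - f (butlast u))^2 / r u) * (\<Sum>u\<in>?A. (Zu N K n u)^2 * r u)"
    using r by (simp add: power_divide power_mult_distrib less_imp_le power2_commute)
  also have "\<dots> \<le> (\<Sum>u\<in>?E. (f u - f (butlast u))^2 / r u) * (\<Sum>u\<in>EE K n. (Zu N K n u)^2 * r u)"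
  proof (rule mult_mono)
    show "(\<Sum>u\<in>?A. (f u - f (butlast u))^2 / r u) \<le> (\<Sum>u\<in>?E. (f u - f (butlast u))^2 / r u)"
      by (rule sum_mono2[OF fE]) (auto simp: EE_def less_imp_le[OF r])
    show "(\<Sum>u\<in>?A. (Zu N K n u)^2 * r u) \<le> (\<Sum>u\<in>EE K n. (Zu N K n u)^2 * r u)"
      by (rule sum_mono2) (auto simp: less_imp_le[OF r])
  qed (auto intro!: sum_nonneg simp: less_imp_le[OF r])
  also have "(\<Sum>u\<in>EE K n. (Zu N K n u)^2 * r u) = Wt N xi m K n"
    unfolding Wt_eq r_def ..
  finally show ?thesis unfolding r_def .
qed



definition pref :: "nat list set \<Rightarrow> nat list set" where
  "pref V = {take i y | y i. y \<in> V \<and> i < length y}"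

definition con :: "nat list set \<Rightarrow> nat list \<Rightarrow> nat \<Rightarrow> bool" where
  "con V x a = (\<forall>y\<in>V. \<forall>i<length y. take i y = x \<longrightarrow> y!i < a)"

definition mu :: "nat pmf \<Rightarrow> nat list set \<Rightarrow> nat list \<Rightarrow> real" where
  "mu p V x = measure_pmf.prob p {a. con V x a}"

definition PV :: "nat pmf \<Rightarrow> nat list set \<Rightarrow> real" where
  "PV p V = (\<Prod>x\<in>pref V. mu p V x)"

definition heads :: "nat list set \<Rightarrow> nat set" where
  "heads V = hd ` {y\<in>V. y \<noteq> []}"

definition tails :: "nat list set \<Rightarrow> nat \<Rightarrow> nat list set" where
  "tails V a = tl ` {y\<in>V. y \<noteq> [] \<and> hd y = a}"

lemma finite_pref: "finite V \<Longrightarrow> finite (pref V)"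
proof -
  assume V: "finite V"
  have "pref V \<subseteq> (\<Union>y\<in>V. (\<lambda>i. take i y) ` {..<length y})" unfolding pref_def by auto
  moreover have "finite (\<Union>y\<in>V. (\<lambda>i. take i y) ` {..<length y})" using V by auto
  ultimately show ?thesis by (rule finite_subset)
qed

lemma pref_eq: "pref V = (if heads V = {} then {} else {[]}) \<union> (\<Union>a\<in>heads V. (Cons a) ` pref (tails V a))"
proof (intro equalityI subsetI)
  fix x assume "x \<in> pref V"
  then obtain y i where y: "y \<in> V" "i < length y" "x = take i y" unfolding pref_def by auto
  then have ne: "y \<noteq> []" by auto
  then have hy: "hd y \<in> heads V" using y unfolding heads_def by auto
  show "x \<in> (if heads V = {} then {} else {[]}) \<union> (\<Union>a\<in>heads V. (Cons a) ` pref (tails V a))"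
  proof (cases i)
    case 0 then show ?thesis using y hy by auto
  next
    case (Suc j)
    have "tl y \<in> tails V (hd y)" using y ne unfolding tails_def by auto
    moreover have "x = hd y # take j (tl y)" using y Suc ne by (cases y) auto
    moreover have "j < length (tl y)" using y Suc by auto
    ultimately show ?thesis using hy unfolding pref_def by blast
  qed
next
  fix x assume x: "x \<in> (if heads V = {} then {} else {[]}) \<union> (\<Union>a\<in>heads V. (Cons a) ` pref (tails V a))"
  show "x \<in> pref V"
  proof (cases "x \<in> (if heads V = {} then {} else {[]})")
    case True
    then have "x = []" "heads V \<noteq> {}" by (auto split: if_splits)
    then obtain y where "y \<in> V" "y \<noteq> []" unfolding heads_def by auto
    then show ?thesis using \<open>x = []\<close> unfolding pref_def by (auto intro!: exI[of _ y] exI[of _ 0])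
  next
    case False
    then obtain a z j where "a \<in> heads V" "z \<in> tails V a" "j < length z" "x = a # take j z"
      using x unfolding pref_def by auto
    then obtain y where y: "y \<in> V" "y \<noteq> []" "hd y = a" "z = tl y" unfolding tails_def by auto
    then have "x = take (Suc j) y" using \<open>x = a # take j z\<close> by (cases y) auto
    moreover have "Suc j < length y" using y \<open>j < length z\<close> by (cases y) auto
    ultimately show ?thesis using y unfolding pref_def by blast
  qed
qed

lemma con_Nil: "con V [] c = (\<forall>h\<in>heads V. h < c)"
proof
  assume H: "con V [] c"
  show "\<forall>h\<in>heads V. h < c"
  proof
    fix h assume "h \<in> heads V"
    then obtain y where y: "y \<in> V" "y \<noteq> []" "h = hd y" unfolding heads_def by auto
    then obtain b z where yz: "y = b # z" by (cases y) auto
    have "y ! 0 < c" using H y yz unfolding con_def by force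
    then show "h < c" using y yz by simp
  qed
next
  assume H: "\<forall>h\<in>heads V. h < c"
  show "con V [] c" unfolding con_def
  proof (intro ballI allI impI)
    fix y i assume y: "y \<in> V" "i < length y" "take i y = []"
    then have "i = 0" "y \<noteq> []" by auto
    then obtain b z where yz: "y = b # z" by (cases y) auto
    have "hd y \<in> heads V" using y unfolding heads_def by auto
    then show "y ! i < c" using H \<open>i = 0\<close> yz by auto
  qed
qed

lemma con_Cons: "con V (a # x) c = con (tails V a) x c"
proof
  assume H: "con V (a # x) c"
  show "con (tails V a) x c" unfolding con_def
  proof (intro ballI allI impI)
    fix z i assume z: "z \<in> tails V a" "i < length z" "take i z = x"
    then obtain y where y: "y \<in> V" "y \<noteq> []" "hd y = a" "z = tl y" unfolding tails_def by auto
    then obtain b where yz: "y = a # z" by (cases y) auto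
    have "take (Suc i) y = a # x" "Suc i < length y" using yz z by auto
    then have "y ! Suc i < c" using H y unfolding con_def by blast
    then show "z ! i < c" using yz by simp
  qed
next
  assume H: "con (tails V a) x c"
  show "con V (a # x) c" unfolding con_def
  proof (intro ballI allI impI)
    fix y i assume y: "y \<in> V" "i < length y" "take i y = a # x"
    then obtain j where j: "i = Suc j" by (cases i) auto
    have "y \<noteq> []" using y by auto
    then obtain b z where yz: "y = b # z" by (cases y) auto
    have "b = a" "take j z = x" "j < length z" using y j yz by auto
    moreover have "z \<in> tails V a" using y yz \<open>b = a\<close> unfolding tails_def by force
    ultimately have "z ! j < c" using H unfolding con_def by blast
    then show "y ! i < c" using j yz by simp
  qed
qed

lemma PV_rec:
  assumes V: "finite V"
  shows "PV p V = (if heads V = {} then 1 else measure_pmf.prob p {c. \<forall>h\<in>heads V. h < c}) *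
                   (\<Prod>a\<in>heads V. PV p (tails V a))"
proof -
  have fH: "finite (heads V)" using V unfolding heads_def by auto
  have fT: "finite (tails V a)" for a using V unfolding tails_def by auto
  have fP: "finite (pref (tails V a))" for a using fT by (rule finite_pref)
  let ?U = "\<Union>a\<in>heads V. (Cons a) ` pref (tails V a)"
  have "PV p V = (\<Prod>x\<in>(if heads V = {} then {} else {[]}) \<union> ?U. mu p V x)"
    unfolding PV_def by (rule arg_cong[where f="prod (mu p V)", OF pref_eq])
  also have "\<dots> = (\<Prod>x\<in>(if heads V = {} then {} else {[]}). mu p V x) * (\<Prod>x\<in>?U. mu p V x)"
    by (rule prod.union_disjoint) (use fH fP in auto)
  also have "(\<Prod>x\<in>(if heads V = {} then {} else {[]}). mu p V x) =
      (if heads V = {} then 1 else measure_pmf.prob p {c. \<forall>h\<in>heads V. h < c})"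
    by (simp add: mu_def con_Nil)
  also have "(\<Prod>x\<in>?U. mu p V x) = (\<Prod>a\<in>heads V. \<Prod>x\<in>(Cons a) ` pref (tails V a). mu p V x)"
    by (rule prod.UNION_disjoint) (use fH fP in auto)
  also have "\<dots> = (\<Prod>a\<in>heads V. PV p (tails V a))"
  proof (rule prod.cong[OF refl])
    fix a
    have "(\<Prod>x\<in>(Cons a) ` pref (tails V a). mu p V x) = (\<Prod>x\<in>pref (tails V a). mu p V (a # x))"
      by (rule prod.reindex_cong[where l="Cons a"]) auto
    also have "\<dots> = PV p (tails V a)" unfolding PV_def mu_def con_Cons ..
    finally show "(\<Prod>x\<in>(Cons a) ` pref (tails V a). mu p V x) = PV p (tails V a)" .
  qed
  finally show ?thesis .
qed

lemma heads_empty[simp]: "heads {} = {}" by (simp add: heads_def)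
lemma heads_insert[simp]: "heads (insert y V) = (if y = [] then heads V else insert (hd y) (heads V))"
  by (auto simp: heads_def)
lemma tails_empty[simp]: "tails {} a = {}" by (simp add: tails_def)
lemma tails_insert[simp]: "tails (insert y V) a = (if y \<noteq> [] \<and> hd y = a then insert (tl y) (tails V a) else tails V a)"
  by (auto simp: tails_def)

definition q :: "nat pmf \<Rightarrow> nat \<Rightarrow> real" where
  "q p a = measure_pmf.prob p {c. a < c}"

lemma PV_empty: "PV p {} = 1" and PV_Nil: "PV p {[]} = 1"
  by (simp_all add: PV_def pref_def)

lemma PV_single: "PV p {a # w} = q p a * PV p {w}"
proof -
  have "heads {a # w} = {a}" "tails {a # w} a = {w}" by auto
  then show ?thesis by (subst PV_rec) (auto simp: q_def)
qed

lemma PV_pair_eq: "PV p {a # v, a # w} = q p a * PV p {v, w}"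
proof -
  have "heads {a # v, a # w} = {a}" "tails {a # v, a # w} a = {v, w}" by auto
  then show ?thesis by (subst PV_rec) (auto simp: q_def)
qed

lemma PV_pair_neq: "a \<noteq> b \<Longrightarrow> PV p {a # v, b # w} = q p (max a b) * PV p {v} * PV p {w}"
proof -
  assume ab: "a \<noteq> b"
  have "heads {a # v, b # w} = {a, b}" "tails {a # v, b # w} a = {v}" "tails {a # v, b # w} b = {w}"
    using ab by auto
  moreover have "{c. \<forall>h\<in>{a, b}. h < c} = {c. max a b < c}" by auto
  ultimately show ?thesis using ab by (subst PV_rec) (auto simp: q_def)
qed



lemma PV_nonneg: "0 \<le> PV p V" unfolding PV_def mu_def by (auto intro!: prod_nonneg)
lemma q_nonneg: "0 \<le> q p a" unfolding q_def by auto

lemma LL_Suc: "LL K (Suc n) = (\<lambda>(a,w). a # w) ` ({..<K} \<times> LL K n)"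
proof (intro equalityI subsetI)
  fix x assume "x \<in> LL K (Suc n)"
  then obtain a w where "x = a # w" "a < K" "w \<in> LL K n" unfolding LL_def by (cases x) auto
  then show "x \<in> (\<lambda>(a,w). a # w) ` ({..<K} \<times> LL K n)" by force
qed (auto simp: LL_def)

lemma LL_0: "LL K 0 = {[]}" by (auto simp: LL_def)

lemma inj_Cons2: "inj_on (\<lambda>(a,w). a # w) A" by (auto simp: inj_on_def)

lemma sum_LL_Suc: "(\<Sum>x\<in>LL K (Suc n). g x) = (\<Sum>a<K. \<Sum>v\<in>LL K n. g (a # v))"
proof -
  have "(\<Sum>x\<in>LL K (Suc n). g x) = (\<Sum>av\<in>{..<K} \<times> LL K n. g (fst av # snd av))"
    unfolding LL_Suc by (subst sum.reindex[OF inj_Cons2]) (simp add: case_prod_unfold)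
  also have "\<dots> = (\<Sum>a<K. \<Sum>v\<in>LL K n. g (a # v))"
    by (simp add: sum.cartesian_product case_prod_unfold)
  finally show ?thesis .
qed

definition mK :: "nat pmf \<Rightarrow> nat \<Rightarrow> real" where "mK p K = (\<Sum>a<K. q p a)"
definition sK :: "nat pmf \<Rightarrow> nat \<Rightarrow> real" where
  "sK p K = (\<Sum>a<K. \<Sum>b\<in>{..<K}-{a}. q p (max a b))"

lemma sigma_eq: "(\<Sum>w\<in>LL K n. PV p {w}) = mK p K ^ n"
proof (induction n)
  case 0 then show ?case by (simp add: LL_0 PV_Nil)
next
  case (Suc n)
  have "(\<Sum>w\<in>LL K (Suc n). PV p {w}) = (\<Sum>a<K. \<Sum>w\<in>LL K n. q p a * PV p {w})"
    by (simp add: sum_LL_Suc PV_single)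
  also have "\<dots> = mK p K * (\<Sum>w\<in>LL K n. PV p {w})"
    unfolding mK_def sum_distrib_right by (simp add: sum_distrib_left)
  finally show ?case using Suc by simp
qed

definition Pk :: "nat \<Rightarrow> nat \<Rightarrow> nat \<Rightarrow> (nat list \<times> nat list) set" where
  "Pk K n k = {(v,w)\<in>LL K n \<times> LL K n. take k v = take k w}"

definition Pi2 :: "nat pmf \<Rightarrow> nat \<Rightarrow> nat \<Rightarrow> nat \<Rightarrow> real" where
  "Pi2 p K n k = (\<Sum>vw\<in>Pk K n k. PV p {fst vw, snd vw})"

lemma finite_Pk[simp]: "finite (Pk K n k)"
  unfolding Pk_def by (rule finite_subset[of _ "LL K n \<times> LL K n"]) auto

lemma Pk_Suc: "Pk K (Suc n) (Suc k) = (\<lambda>(a,vw). (a # fst vw, a # snd vw)) ` ({..<K} \<times> Pk K n k)"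
proof (intro equalityI subsetI)
  fix x assume x: "x \<in> Pk K (Suc n) (Suc k)"
  obtain v w where vw: "x = (v, w)" by (cases x)
  obtain a v' where v: "v = a # v'" "a < K" "v' \<in> LL K n" using x vw unfolding Pk_def LL_Suc by auto
  obtain b w' where w: "w = b # w'" "b < K" "w' \<in> LL K n" using x vw unfolding Pk_def LL_Suc by auto
  have "a = b" "take k v' = take k w'" using x vw v w unfolding Pk_def by auto
  then show "x \<in> (\<lambda>(a,vw). (a # fst vw, a # snd vw)) ` ({..<K} \<times> Pk K n k)"
    using vw v w unfolding Pk_def by (auto intro!: image_eqI[where x="(a, (v', w'))"])
qed (auto simp: Pk_def LL_def)

lemma Pi2_Suc: "Pi2 p K (Suc n) (Suc k) = mK p K * Pi2 p K n k"
proof -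
  have inj: "inj_on (\<lambda>(a,vw). (a # fst vw, a # snd vw)) A" for A :: "(nat \<times> nat list \<times> nat list) set"
    by (auto simp: inj_on_def)
  have "Pi2 p K (Suc n) (Suc k) = (\<Sum>(a,vw)\<in>{..<K} \<times> Pk K n k. PV p {a # fst vw, a # snd vw})"
    unfolding Pi2_def Pk_Suc by (subst sum.reindex[OF inj]) (simp add: case_prod_unfold)
  also have "\<dots> = (\<Sum>a<K. \<Sum>vw\<in>Pk K n k. q p a * PV p {fst vw, snd vw})"
  proof -
    have "(\<Sum>(a,vw)\<in>{..<K} \<times> Pk K n k. PV p {a # fst vw, a # snd vw}) = (\<Sum>a<K. \<Sum>vw\<in>Pk K n k. PV p {a # fst vw, a # snd vw})"
      by (simp add: sum.cartesian_product case_prod_unfold)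
    then show ?thesis by (simp add: PV_pair_eq)
  qed
  also have "\<dots> = mK p K * Pi2 p K n k"
    unfolding mK_def Pi2_def sum_distrib_right by (simp add: sum_distrib_left)
  finally show ?thesis .
qed

lemma Pi2_shift: "k \<le> n \<Longrightarrow> Pi2 p K n k = mK p K ^ k * Pi2 p K (n - k) 0"
proof (induction k arbitrary: n)
  case (Suc k)
  then obtain n' where n: "n = Suc n'" by (cases n) auto
  show ?case using Suc n by (simp add: Pi2_Suc)
qed simp

lemma Pi2_0: "Pi2 p K 0 0 = 1"
proof -
  have "Pk K 0 0 = {([],[])}" by (auto simp: Pk_def LL_0)
  then show ?thesis by (simp add: Pi2_def PV_Nil)
qed

lemma Pi2_Suc0: "Pi2 p K (Suc n) 0 = mK p K * Pi2 p K n 0 + sK p K * (mK p K ^ n)^2"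
proof -
  let ?S = "LL K n"
  have P0: "Pk K m 0 = LL K m \<times> LL K m" for m by (auto simp: Pk_def)
  have "Pi2 p K (Suc n) 0 = (\<Sum>x\<in>LL K (Suc n). \<Sum>y\<in>LL K (Suc n). PV p {x, y})"
    unfolding Pi2_def P0 by (simp add: sum.cartesian_product case_prod_unfold)
  also have "\<dots> = (\<Sum>a<K. \<Sum>v\<in>?S. \<Sum>b<K. \<Sum>w\<in>?S. PV p {a # v, b # w})"
    by (simp add: sum_LL_Suc)
  also have "\<dots> = (\<Sum>a<K. \<Sum>b<K. \<Sum>v\<in>?S. \<Sum>w\<in>?S. PV p {a # v, b # w})"
    by (rule sum.cong[OF refl], rule sum.swap)
  also have "\<dots> = (\<Sum>a<K. q p a * Pi2 p K n 0 + (\<Sum>b\<in>{..<K}-{a}. q p (max a b) * (mK p K ^ n)^2))"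
  proof (rule sum.cong[OF refl])
    fix a assume a: "a \<in> {..<K}"
    let ?G = "\<lambda>b. \<Sum>v\<in>?S. \<Sum>w\<in>?S. PV p {a # v, b # w}"
    have "(\<Sum>b<K. ?G b) = ?G a + (\<Sum>b\<in>{..<K}-{a}. ?G b)"
      using a by (simp add: sum.remove)
    moreover have "?G a = q p a * Pi2 p K n 0"
      unfolding Pi2_def P0 by (simp add: PV_pair_eq sum_distrib_left sum.cartesian_product case_prod_unfold)
    moreover have "?G b = q p (max a b) * (mK p K ^ n)^2" if "b \<in> {..<K}-{a}" for b
    proof -
      have "?G b = (\<Sum>v\<in>?S. \<Sum>w\<in>?S. q p (max a b) * PV p {v} * PV p {w})"
        using that by (simp add: PV_pair_neq)
      also have "\<dots> = q p (max a b) * ((\<Sum>v\<in>?S. PV p {v}) * (\<Sum>w\<in>?S. PV p {w}))"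
        unfolding sum_product by (simp add: sum_distrib_left mult.assoc)
      finally show ?thesis by (simp add: sigma_eq power2_eq_square)
    qed
    ultimately show "(\<Sum>b<K. ?G b) = q p a * Pi2 p K n 0 + (\<Sum>b\<in>{..<K}-{a}. q p (max a b) * (mK p K ^ n)^2)"
      by simp
  qed
  also have "\<dots> = mK p K * Pi2 p K n 0 + sK p K * (mK p K ^ n)^2"
    by (simp add: sum.distrib mK_def sK_def sum_distrib_right)
  finally show ?thesis .
qed

lemma Pi2_bound0:
  assumes m1: "1 < m" and mK: "0 \<le> mK p K" "mK p K \<le> m" and sK: "0 \<le> sK p K" "sK p K \<le> s"
  shows "Pi2 p K n 0 \<le> (1 + s / (m * (m - 1))) * m ^ (2 * n)"
proof (induction n)
  case 0
  have "0 \<le> s / (m * (m - 1))" using sK m1 by (intro divide_nonneg_pos) auto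
  then show ?case by (simp add: Pi2_0)
next
  case (Suc n)
  let ?C = "1 + s / (m * (m - 1))"
  have mm: "0 < m * (m - 1)" using m1 by simp
  have s0: "0 \<le> s" using sK by simp
  have Pn: "0 \<le> Pi2 p K n 0" unfolding Pi2_def by (auto intro!: sum_nonneg PV_nonneg)
  have "Pi2 p K (Suc n) 0 = mK p K * Pi2 p K n 0 + sK p K * (mK p K ^ n)^2" by (rule Pi2_Suc0)
  also have "\<dots> \<le> m * (?C * m ^ (2 * n)) + s * (m ^ n)^2"
    by (intro add_mono mult_mono Suc power_mono) (use mK sK Pn m1 in auto)
  also have "\<dots> = (?C * m + s) * m ^ (2 * n)"
  proof -
    have "(m^n)^2 = m^(2*n)" by (simp add: power_mult[symmetric] mult.commute)
    then show ?thesis by (simp add: algebra_simps)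
  qed
  also have "\<dots> \<le> ?C * m^2 * m ^ (2 * n)"
  proof (rule mult_right_mono)
    define t where "t = s / (m * (m - 1))"
    have t0: "0 \<le> t" using s0 mm by (simp add: t_def)
    have "t * (m * (m - 1)) = s" using m1 unfolding t_def by simp
    then have "(1 + t) * m + s = m + t * m^2" by (simp add: algebra_simps power2_eq_square)
    also have "\<dots> \<le> m^2 + t * m^2" using m1 by (simp add: power2_eq_square)
    finally show "?C * m + s \<le> ?C * m^2" by (simp add: t_def algebra_simps)
  qed (use m1 in simp)
  also have "?C * m^2 * m ^ (2 * n) = ?C * m ^ (2 * Suc n)" by (simp add: power_add[symmetric])
  finally show ?case by simp
qed



lemma pmf_integrable_bounded:
  fixes f :: "nat \<Rightarrow> real"
  assumes "\<And>c. \<bar>f c\<bar> \<le> B"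
  shows "integrable (measure_pmf p) f"
  by (rule measure_pmf.integrable_const_bound[where B=B]) (use assms in auto)

lemma q_integral: "q p a = measure_pmf.expectation p (\<lambda>c. if a < c then 1 else 0)"
proof -
  have "q p a = measure_pmf.expectation p (indicator {c. a < c} :: nat \<Rightarrow> real)"
    using Bochner_Integration.integral_indicator[of "measure_pmf p" "{c. a<c}"] by (simp add: q_def)
  also have "\<dots> = measure_pmf.expectation p (\<lambda>c. if a < c then 1 else 0)"
    by (intro Bochner_Integration.integral_cong) (auto simp: indicator_def)
  finally show ?thesis .
qed

lemma sum_ind_min: "(\<Sum>a<K. if a < c then 1 else 0 :: real) = real (min c K)"
  by (induction K) (auto simp: min_def)

lemma mK_eq: "mK p K = measure_pmf.expectation p (\<lambda>c. real (min c K))"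
proof -
  have "mK p K = (\<Sum>a<K. measure_pmf.expectation p (\<lambda>c. if a < c then 1 else 0))"
    unfolding mK_def by (simp add: q_integral)
  also have "\<dots> = measure_pmf.expectation p (\<lambda>c. \<Sum>a<K. if a < c then 1 else 0 :: real)"
    by (rule Bochner_Integration.integral_sum[symmetric]) (auto intro!: pmf_integrable_bounded[where B=1])
  finally show ?thesis by (simp add: sum_ind_min)
qed

lemma mK_nonneg: "0 \<le> mK p K" unfolding mK_def by (auto intro!: sum_nonneg q_nonneg)

lemma mK_le:
  assumes "integrable (measure_pmf p) real"
  shows "mK p K \<le> offspring_mean p"
  unfolding mK_eq offspring_mean_def
  by (rule integral_mono) (auto intro!: pmf_integrable_bounded[where B="real K"] assms)

lemma mK_lim:
  assumes "integrable (measure_pmf p) real"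
  shows "(\<lambda>K. mK p K) \<longlonglongrightarrow> offspring_mean p"
  unfolding mK_eq offspring_mean_def
proof (rule integral_dominated_convergence[where w=real])
  show "AE x in measure_pmf p. (\<lambda>K. real (min x K)) \<longlonglongrightarrow> real x"
  proof (rule AE_I2)
    fix x :: nat
    have "eventually (\<lambda>K. real (min x K) = real x) sequentially"
      by (rule eventually_sequentiallyI[of x]) auto
    then show "(\<lambda>K. real (min x K)) \<longlonglongrightarrow> real x" by (rule tendsto_eventually)
  qed
qed (use assms in auto)

lemma sK_nonneg: "0 \<le> sK p K" unfolding sK_def by (auto intro!: sum_nonneg q_nonneg)

lemma sK_le:
  assumes "integrable (measure_pmf p) (\<lambda>k. (real k)^2)"
  shows "sK p K \<le> measure_pmf.expectation p (\<lambda>k. (real k)^2)"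
proof -
  let ?g = "\<lambda>a b c. if max a b < c then 1 else 0 :: real"
  have int: "integrable (measure_pmf p) (?g a b)" for a b by (rule pmf_integrable_bounded[where B=1]) auto
  have "sK p K = (\<Sum>a<K. \<Sum>b\<in>{..<K}-{a}. measure_pmf.expectation p (?g a b))"
    unfolding sK_def by (simp add: q_integral)
  also have "\<dots> = (\<Sum>a<K. measure_pmf.expectation p (\<lambda>c. \<Sum>b\<in>{..<K}-{a}. ?g a b c))"
    by (intro sum.cong refl Bochner_Integration.integral_sum[symmetric] int)
  also have "\<dots> = measure_pmf.expectation p (\<lambda>c. \<Sum>a<K. \<Sum>b\<in>{..<K}-{a}. ?g a b c)"
    by (intro Bochner_Integration.integral_sum[symmetric] Bochner_Integration.integrable_sum int)
  also have "\<dots> \<le> measure_pmf.expectation p (\<lambda>k. (real k)^2)"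
  proof (rule integral_mono)
    show "integrable (measure_pmf p) (\<lambda>c. \<Sum>a<K. \<Sum>b\<in>{..<K}-{a}. ?g a b c)"
      by (intro Bochner_Integration.integrable_sum int)
    fix c :: nat
    have "(\<Sum>a<K. \<Sum>b\<in>{..<K}-{a}. ?g a b c) \<le> (\<Sum>a<K. \<Sum>b<K. (if a < c then 1 else 0) * (if b < c then 1 else 0))"
    proof (rule sum_mono)
      fix a assume "a \<in> {..<K}"
      have "(\<Sum>b\<in>{..<K}-{a}. ?g a b c) = (\<Sum>b\<in>{..<K}-{a}. (if a < c then 1 else 0) * (if b < c then 1 else 0))"
        by (intro sum.cong) auto
      also have "\<dots> \<le> (\<Sum>b<K. (if a < c then 1 else 0) * (if b < c then 1 else 0))"
        by (rule sum_mono2) auto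
      finally show "(\<Sum>b\<in>{..<K}-{a}. ?g a b c) \<le> (\<Sum>b<K. (if a < c then 1 else 0) * (if b < c then 1 else 0))" .
    qed
    also have "\<dots> = (real (min c K))^2"
      by (simp add: sum_product[symmetric] sum_ind_min power2_eq_square)
    also have "\<dots> \<le> (real c)^2" by (simp add: power_mono)
    finally show "(\<Sum>a<K. \<Sum>b\<in>{..<K}-{a}. ?g a b c) \<le> (real c)^2" .
  qed (use assms in auto)
  finally show ?thesis .
qed



lemma PiM_prod_nn:
  fixes P :: "'b measure" and g :: "'a \<Rightarrow> 'b \<Rightarrow> ennreal"
  assumes P: "prob_space P" and J: "finite J" and g: "\<And>x. x \<in> J \<Longrightarrow> g x \<in> borel_measurable P"
  shows "(\<integral>\<^sup>+\<omega>. (\<Prod>x\<in>J. g x (\<omega> x)) \<partial>(PiM UNIV (\<lambda>_. P))) = (\<Prod>x\<in>J. integral\<^sup>N P (g x))"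
proof -
  interpret prob_space P by (rule P)
  interpret PS: product_prob_space "\<lambda>_. P" UNIV by unfold_locales
  have meas: "(\<lambda>y. \<Prod>x\<in>J. g x (y x)) \<in> borel_measurable (PiM J (\<lambda>_. P))"
  proof (rule borel_measurable_prod_ennreal)
    fix x assume x: "x \<in> J"
    show "(\<lambda>y. g x (y x)) \<in> borel_measurable (PiM J (\<lambda>_. P))"
      by (rule measurable_compose[where f="\<lambda>y. y x" and g="g x"]) (use x g in \<open>auto intro: measurable_component_singleton\<close>)
  qed
  have "(\<integral>\<^sup>+\<omega>. (\<Prod>x\<in>J. g x (\<omega> x)) \<partial>(PiM UNIV (\<lambda>_. P))) =
        (\<integral>\<^sup>+\<omega>. (\<Prod>x\<in>J. g x (restrict \<omega> J x)) \<partial>(PiM UNIV (\<lambda>_. P)))"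
    by (intro nn_integral_cong prod.cong) auto
  also have "\<dots> = integral\<^sup>N (distr (PiM UNIV (\<lambda>_. P)) (PiM J (\<lambda>_. P)) (\<lambda>\<omega>. restrict \<omega> J)) (\<lambda>y. \<Prod>x\<in>J. g x (y x))"
    apply (rule nn_integral_distr[symmetric])
    subgoal by (rule measurable_restrict_subset) simp
    subgoal unfolding measurable_distr_eq1 by (rule meas)
    done
  also have "distr (PiM UNIV (\<lambda>_. P)) (PiM J (\<lambda>_. P)) (\<lambda>\<omega>. restrict \<omega> J) = PiM J (\<lambda>_. P)"
    by (rule PS.distr_PiM_restrict_finite) (use J in auto)
  also have "integral\<^sup>N (PiM J (\<lambda>_. P)) (\<lambda>y. \<Prod>x\<in>J. g x (y x)) = (\<Prod>x\<in>J. integral\<^sup>N P (g x))"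
    by (rule PS.product_nn_integral_prod) (use J g in auto)
  finally show ?thesis .
qed

lemma pair_prod_nn:
  fixes h1 :: "nat \<Rightarrow> ennreal" and h2 :: "real \<Rightarrow> ennreal"
  assumes X: "prob_space X" and h2: "h2 \<in> borel_measurable X"
  shows "(\<integral>\<^sup>+z. h1 (fst z) * h2 (snd z) \<partial>(measure_pmf p \<Otimes>\<^sub>M X)) = (\<integral>\<^sup>+a. h1 a \<partial>measure_pmf p) * (\<integral>\<^sup>+b. h2 b \<partial>X)"
proof -
  interpret prob_space X by (rule X)
  have m: "(\<lambda>z. h1 (fst z) * h2 (snd z)) \<in> borel_measurable (measure_pmf p \<Otimes>\<^sub>M X)"
    using h2 by measurable
  have "(\<integral>\<^sup>+z. h1 (fst z) * h2 (snd z) \<partial>(measure_pmf p \<Otimes>\<^sub>M X)) =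
        (\<integral>\<^sup>+a. \<integral>\<^sup>+b. h1 a * h2 b \<partial>X \<partial>measure_pmf p)"
    using nn_integral_fst[OF m] by simp
  also have "\<dots> = (\<integral>\<^sup>+a. h1 a * (\<integral>\<^sup>+b. h2 b \<partial>X) \<partial>measure_pmf p)"
    by (intro nn_integral_cong nn_integral_cmult h2)
  also have "\<dots> = (\<integral>\<^sup>+a. h1 a \<partial>measure_pmf p) * (\<integral>\<^sup>+b. h2 b \<partial>X)"
    by (rule nn_integral_multc) simp
  finally show ?thesis .
qed

lemma meas_fst:
  fixes h :: "nat \<Rightarrow> 'c"
  shows "(\<lambda>\<omega>. h (fst (\<omega> x))) \<in> measurable (gw_space p X) (count_space UNIV) \<Longrightarrow> True"
  by simp

lemma meas_fst_real:
  fixes h :: "nat \<Rightarrow> real"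
  shows "(\<lambda>\<omega>. h (fst (\<omega> x))) \<in> borel_measurable (gw_space p X)"
proof -
  have "(\<lambda>\<omega>. \<omega> x) \<in> measurable (gw_space p X) (measure_pmf p \<Otimes>\<^sub>M X)"
    unfolding gw_space_def by (rule measurable_component_singleton) simp
  moreover have "(\<lambda>z. h (fst z)) \<in> borel_measurable (measure_pmf p \<Otimes>\<^sub>M X)"
    by (rule measurable_compose[OF measurable_fst]) simp
  ultimately show ?thesis by (rule measurable_compose[where f="\<lambda>\<omega>. \<omega> x" and g="\<lambda>z. h (fst z)"])
qed

lemma meas_snd_real:
  fixes h :: "real \<Rightarrow> real"
  assumes X: "sets X = sets borel" and h: "h \<in> borel_measurable borel"
  shows "(\<lambda>\<omega>. h (snd (\<omega> x))) \<in> borel_measurable (gw_space p X)"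
proof -
  have "(\<lambda>\<omega>. \<omega> x) \<in> measurable (gw_space p X) (measure_pmf p \<Otimes>\<^sub>M X)"
    unfolding gw_space_def by (rule measurable_component_singleton) simp
  moreover have "h \<in> borel_measurable X" using h by (subst measurable_cong_sets[OF X refl])
  then have "(\<lambda>z. h (snd z)) \<in> borel_measurable (measure_pmf p \<Otimes>\<^sub>M X)"
    by (rule measurable_compose[OF measurable_snd])
  ultimately show ?thesis by (rule measurable_compose[where f="\<lambda>\<omega>. \<omega> x" and g="\<lambda>z. h (snd z)"])
qed

lemma meas_indN: "(\<lambda>\<omega>. indN (\<lambda>u. fst (\<omega> u)) w) \<in> borel_measurable (gw_space p X)"
  unfolding indN_def
  by (rule borel_measurable_prod) (rule meas_fst_real[where h="\<lambda>a. if _ < a then 1 else 0"])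

lemma prod01: "finite A \<Longrightarrow> (\<Prod>x\<in>A. if P x then 1 else 0 :: real) = (if \<forall>x\<in>A. P x then 1 else 0)"
  by (induction A rule: finite_induct) auto

lemma ind_prod_con:
  assumes V: "finite V" and J: "finite J" and sub: "pref V \<subseteq> J"
  shows "(\<Prod>y\<in>V. indN N y) = (\<Prod>x\<in>J. if con V x (N x) then 1 else 0)"
proof -
  have "(\<Prod>y\<in>V. indN N y) = (\<Prod>y\<in>V. if y \<in> gw_tree N then 1 else 0)" by (simp add: indN_tree)
  also have "\<dots> = (if \<forall>y\<in>V. y \<in> gw_tree N then 1 else 0)" by (rule prod01[OF V])
  also have "(\<forall>y\<in>V. y \<in> gw_tree N) = (\<forall>x\<in>J. con V x (N x))"
  proof
    assume H: "\<forall>y\<in>V. y \<in> gw_tree N"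
    show "\<forall>x\<in>J. con V x (N x)" unfolding con_def using H unfolding gw_tree_def by auto
  next
    assume H: "\<forall>x\<in>J. con V x (N x)"
    show "\<forall>y\<in>V. y \<in> gw_tree N" unfolding gw_tree_def
    proof (intro ballI allI impI CollectI)
      fix y k assume y: "y \<in> V" "k < length y"
      then have "take k y \<in> J" using sub unfolding pref_def by blast
      then show "y ! k < N (take k y)" using H y unfolding con_def by blast
    qed
  qed
  also have "(if \<forall>x\<in>J. con V x (N x) then 1 else 0) = (\<Prod>x\<in>J. if con V x (N x) then 1 else 0 :: real)"
    by (rule prod01[OF J, symmetric])
  finally show ?thesis .
qed

lemma mu_outside: "x \<notin> pref V \<Longrightarrow> mu p V x = 1"
proof -
  assume x: "x \<notin> pref V"
  have "{a. con V x a} = UNIV" using x unfolding con_def pref_def by auto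
  then show ?thesis by (simp add: mu_def)
qed

lemma E_term:
  assumes X: "prob_space X" "sets X = sets borel"
    and V: "finite V" and J: "finite J" and sub: "pref V \<subseteq> J"
    and c: "\<And>x. c x \<in> borel_measurable borel" "\<And>x b. 0 \<le> c x b"
    and Ec: "\<And>x. (\<integral>\<^sup>+b. ennreal (c x b) \<partial>X) = ennreal (Ec x)" "\<And>x. 0 \<le> Ec x"
  shows "(\<integral>\<^sup>+\<omega>. ennreal ((\<Prod>x\<in>J. c x (snd (\<omega> x))) * (\<Prod>y\<in>V. indN (\<lambda>u. fst (\<omega> u)) y)) \<partial>gw_space p X)
          = ennreal ((\<Prod>x\<in>J. Ec x) * PV p V)"
proof -
  let ?g = "\<lambda>x z. ennreal (c x (snd z) * (if con V x (fst z) then 1 else 0))"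
  have cX: "c x \<in> borel_measurable X" for x using c(1) by (subst measurable_cong_sets[OF X(2) refl])
  have "(\<integral>\<^sup>+\<omega>. ennreal ((\<Prod>x\<in>J. c x (snd (\<omega> x))) * (\<Prod>y\<in>V. indN (\<lambda>u. fst (\<omega> u)) y)) \<partial>gw_space p X)
      = (\<integral>\<^sup>+\<omega>. (\<Prod>x\<in>J. ?g x (\<omega> x)) \<partial>gw_space p X)"
  proof (rule nn_integral_cong)
    fix \<omega> :: "nat list \<Rightarrow> nat \<times> real"
    have "(\<Prod>y\<in>V. indN (\<lambda>u. fst (\<omega> u)) y) = (\<Prod>x\<in>J. if con V x (fst (\<omega> x)) then 1 else 0)"
      by (rule ind_prod_con[OF V J sub])
    then have "(\<Prod>x\<in>J. c x (snd (\<omega> x))) * (\<Prod>y\<in>V. indN (\<lambda>u. fst (\<omega> u)) y)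
        = (\<Prod>x\<in>J. c x (snd (\<omega> x)) * (if con V x (fst (\<omega> x)) then 1 else 0))"
      by (simp add: prod.distrib)
    then show "ennreal ((\<Prod>x\<in>J. c x (snd (\<omega> x))) * (\<Prod>y\<in>V. indN (\<lambda>u. fst (\<omega> u)) y)) = (\<Prod>x\<in>J. ?g x (\<omega> x))"
      using c(2) by (simp add: prod_ennreal)
  qed
  also have "\<dots> = (\<Prod>x\<in>J. integral\<^sup>N (measure_pmf p \<Otimes>\<^sub>M X) (?g x))"
    unfolding gw_space_def
  proof (rule PiM_prod_nn[OF _ J])
    show "prob_space (measure_pmf p \<Otimes>\<^sub>M X)"
      using X(1) by (intro prob_space_pair) (auto simp: measure_pmf.prob_space_axioms)
    fix x show "?g x \<in> borel_measurable (measure_pmf p \<Otimes>\<^sub>M X)"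
      using cX[of x] by measurable
  qed
  also have "\<dots> = (\<Prod>x\<in>J. ennreal (mu p V x * Ec x))"
  proof (rule prod.cong[OF refl])
    fix x
    have "integral\<^sup>N (measure_pmf p \<Otimes>\<^sub>M X) (?g x) =
        (\<integral>\<^sup>+z. ennreal (if con V x (fst z) then 1 else 0) * ennreal (c x (snd z)) \<partial>(measure_pmf p \<Otimes>\<^sub>M X))"
      using c(2) by (intro nn_integral_cong) (simp add: ennreal_mult'[symmetric] mult.commute)
    also have "\<dots> = (\<integral>\<^sup>+a. ennreal (if con V x a then 1 else 0) \<partial>measure_pmf p) * (\<integral>\<^sup>+b. ennreal (c x b) \<partial>X)"
      by (rule pair_prod_nn[OF X(1)]) (use cX in measurable)
    also have "(\<integral>\<^sup>+a. ennreal (if con V x a then 1 else 0) \<partial>measure_pmf p) = ennreal (mu p V x)"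
    proof -
      have "(\<integral>\<^sup>+a. ennreal (if con V x a then 1 else 0) \<partial>measure_pmf p) = (\<integral>\<^sup>+a. indicator {a. con V x a} a \<partial>measure_pmf p)"
        by (intro nn_integral_cong) (auto simp: indicator_def)
      also have "\<dots> = emeasure (measure_pmf p) {a. con V x a}" by simp
      also have "\<dots> = ennreal (mu p V x)" by (simp add: mu_def measure_pmf.emeasure_eq_measure)
      finally show ?thesis .
    qed
    finally show "integral\<^sup>N (measure_pmf p \<Otimes>\<^sub>M X) (?g x) = ennreal (mu p V x * Ec x)"
      using Ec by (simp add: ennreal_mult mu_def)
  qed
  also have "\<dots> = ennreal ((\<Prod>x\<in>J. mu p V x) * (\<Prod>x\<in>J. Ec x))"
    using Ec(2) by (simp add: prod_ennreal mu_def prod.distrib)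
  also have "(\<Prod>x\<in>J. mu p V x) = PV p V"
    unfolding PV_def by (rule prod.mono_neutral_right[OF J sub]) (auto simp: mu_outside)
  finally show ?thesis by (simp add: mult.commute)
qed



lemma meas_indN_enn: "(\<lambda>\<omega>. ennreal (indN (\<lambda>u. fst (\<omega> u)) w)) \<in> borel_measurable (gw_space p X)"
  by (rule measurable_compose[OF meas_indN measurable_ennreal])

lemma EZ:
  assumes X: "prob_space X" "sets X = sets borel"
  shows "(\<integral>\<^sup>+\<omega>. ennreal (Zt (\<lambda>u. fst (\<omega> u)) K n) \<partial>gw_space p X) = ennreal (mK p K ^ n)"
proof -
  interpret X: prob_space X by (rule X(1))
  have "(\<integral>\<^sup>+\<omega>. ennreal (Zt (\<lambda>u. fst (\<omega> u)) K n) \<partial>gw_space p X) =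
        (\<integral>\<^sup>+\<omega>. (\<Sum>w\<in>LL K n. ennreal (indN (\<lambda>u. fst (\<omega> u)) w)) \<partial>gw_space p X)"
    unfolding Zt_def by (intro nn_integral_cong) (simp add: indN_nonneg)
  also have "\<dots> = (\<Sum>w\<in>LL K n. \<integral>\<^sup>+\<omega>. ennreal (indN (\<lambda>u. fst (\<omega> u)) w) \<partial>gw_space p X)"
    by (rule nn_integral_sum) (rule meas_indN_enn)
  also have "\<dots> = (\<Sum>w\<in>LL K n. ennreal (PV p {w}))"
  proof (rule sum.cong[OF refl])
    fix w
    have "(\<integral>\<^sup>+\<omega>. ennreal ((\<Prod>x\<in>pref {w}. (\<lambda>x b. 1::real) x (snd (\<omega> x))) * (\<Prod>y\<in>{w}. indN (\<lambda>u. fst (\<omega> u)) y)) \<partial>gw_space p X)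
          = ennreal ((\<Prod>x\<in>pref {w}. (\<lambda>x. 1::real) x) * PV p {w})"
      by (rule E_term[OF X]) (auto simp: finite_pref X.emeasure_space_1)
    then show "(\<integral>\<^sup>+\<omega>. ennreal (indN (\<lambda>u. fst (\<omega> u)) w) \<partial>gw_space p X) = ennreal (PV p {w})" by simp
  qed
  also have "\<dots> = ennreal (mK p K ^ n)" by (simp add: PV_nonneg sigma_eq)
  finally show ?thesis .
qed

lemma EW:
  assumes X: "prob_space X" "sets X = sets borel" and pos: "AE x in X. 0 < x"
    and int: "integrable X (\<lambda>x. x)" and m: "0 \<le> m"
  shows "(\<integral>\<^sup>+\<omega>. ennreal (Wt (\<lambda>u. fst (\<omega> u)) (\<lambda>u. max (snd (\<omega> u)) 0) m K n) \<partial>gw_space p X)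
       = ennreal (\<Sum>k\<in>{1..n}. m^k * (integral\<^sup>L X (\<lambda>x. x) * Pi2 p K n k))"
proof -
  interpret X: prob_space X by (rule X(1))
  define E where "E = integral\<^sup>L X (\<lambda>x. x)"
  have E0: "0 \<le> E" unfolding E_def using pos by (intro integral_nonneg_AE) (auto elim: AE_mp)
  have Emax: "(\<integral>\<^sup>+b. ennreal (max b 0) \<partial>X) = ennreal E"
  proof -
    have "(\<integral>\<^sup>+b. ennreal (max b 0) \<partial>X) = (\<integral>\<^sup>+b. ennreal b \<partial>X)" by (simp add: ennreal_max_0')
    also have "\<dots> = ennreal E" unfolding E_def
      by (rule nn_integral_eq_integral[OF int]) (use pos in \<open>auto elim: AE_mp\<close>)
    finally show ?thesis .
  qed
  let ?xi = "\<lambda>\<omega> u. max (snd (\<omega> u)) 0"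
  let ?F = "\<lambda>k \<omega> vw. ?xi \<omega> (take k (fst vw)) * indN (\<lambda>u. fst (\<omega> u)) (fst vw) * indN (\<lambda>u. fst (\<omega> u)) (snd vw)"
  have Fnn: "0 \<le> ?F k \<omega> vw" for k \<omega> vw by (simp add: indN_nonneg)
  have measF: "(\<lambda>\<omega>. ennreal (?F k \<omega> vw)) \<in> borel_measurable (gw_space p X)" for k vw
  proof -
    have "(\<lambda>\<omega>. ?xi \<omega> (take k (fst vw))) \<in> borel_measurable (gw_space p X)"
      by (rule meas_snd_real[OF X(2)]) simp
    then have "(\<lambda>\<omega>. ?F k \<omega> vw) \<in> borel_measurable (gw_space p X)"
      by (intro borel_measurable_times meas_indN)
    then show ?thesis by (rule measurable_compose[OF _ measurable_ennreal])
  qed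
  have termE: "(\<integral>\<^sup>+\<omega>. ennreal (?F k \<omega> vw) \<partial>gw_space p X) = ennreal (E * PV p {fst vw, snd vw})" for k vw
  proof -
    obtain v w where vw: "vw = (v, w)" by (cases vw)
    let ?x0 = "take k v"
    let ?J = "pref {v, w} \<union> {?x0}"
    let ?c = "\<lambda>x b. if x = ?x0 then max b 0 else 1 :: real"
    let ?Ec = "\<lambda>x. if x = ?x0 then E else 1"
    have fJ: "finite ?J" by (simp add: finite_pref)
    have "(\<integral>\<^sup>+\<omega>. ennreal ((\<Prod>x\<in>?J. ?c x (snd (\<omega> x))) * (\<Prod>y\<in>{v, w}. indN (\<lambda>u. fst (\<omega> u)) y)) \<partial>gw_space p X)
          = ennreal ((\<Prod>x\<in>?J. ?Ec x) * PV p {v, w})"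
    proof (rule E_term[OF X _ fJ])
      fix x show "(\<integral>\<^sup>+b. ennreal (?c x b) \<partial>X) = ennreal (?Ec x)"
        using Emax by (simp add: X.emeasure_space_1)
    qed (auto simp: E0)
    moreover have "(\<Prod>x\<in>?J. ?c x (snd (\<omega> x))) * (\<Prod>y\<in>{v, w}. indN (\<lambda>u. fst (\<omega> u)) y) = ?F k \<omega> vw" for \<omega>
    proof -
      have "(\<Prod>x\<in>?J. ?c x (snd (\<omega> x))) = ?xi \<omega> ?x0" using fJ by (simp add: prod.delta)
      moreover have "(\<Prod>y\<in>{v, w}. indN (\<lambda>u. fst (\<omega> u)) y) = indN (\<lambda>u. fst (\<omega> u)) v * indN (\<lambda>u. fst (\<omega> u)) w"
        using indN_01[of "\<lambda>u. fst (\<omega> u)" v] by (cases "v = w") auto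
      ultimately show ?thesis using vw by (simp add: mult.assoc)
    qed
    moreover have "(\<Prod>x\<in>?J. ?Ec x) = E" using fJ by (simp add: prod.delta)
    ultimately show ?thesis using vw by simp
  qed
  have "(\<integral>\<^sup>+\<omega>. ennreal (Wt (\<lambda>u. fst (\<omega> u)) (?xi \<omega>) m K n) \<partial>gw_space p X)
      = (\<integral>\<^sup>+\<omega>. (\<Sum>k\<in>{1..n}. ennreal (m^k) * (\<Sum>vw\<in>Pk K n k. ennreal (?F k \<omega> vw))) \<partial>gw_space p X)"
  proof (rule nn_integral_cong)
    fix \<omega>
    have "ennreal (Wt (\<lambda>u. fst (\<omega> u)) (?xi \<omega>) m K n) = (\<Sum>k\<in>{1..n}. ennreal (m^k * (\<Sum>vw\<in>Pk K n k. ?F k \<omega> vw)))"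
      unfolding Wt_def Pk_def using m Fnn
      by (subst sum_ennreal) (auto intro!: mult_nonneg_nonneg sum_nonneg simp: case_prod_unfold indN_nonneg)
    also have "\<dots> = (\<Sum>k\<in>{1..n}. ennreal (m^k) * (\<Sum>vw\<in>Pk K n k. ennreal (?F k \<omega> vw)))"
      using m Fnn by (intro sum.cong refl) (simp add: ennreal_mult sum_nonneg)
    finally show "ennreal (Wt (\<lambda>u. fst (\<omega> u)) (?xi \<omega>) m K n) = (\<Sum>k\<in>{1..n}. ennreal (m^k) * (\<Sum>vw\<in>Pk K n k. ennreal (?F k \<omega> vw)))" .
  qed
  also have "\<dots> = (\<Sum>k\<in>{1..n}. ennreal (m^k) * (\<Sum>vw\<in>Pk K n k. ennreal (E * PV p {fst vw, snd vw})))"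
  proof -
    have "(\<integral>\<^sup>+\<omega>. (\<Sum>k\<in>{1..n}. ennreal (m^k) * (\<Sum>vw\<in>Pk K n k. ennreal (?F k \<omega> vw))) \<partial>gw_space p X)
        = (\<Sum>k\<in>{1..n}. \<integral>\<^sup>+\<omega>. ennreal (m^k) * (\<Sum>vw\<in>Pk K n k. ennreal (?F k \<omega> vw)) \<partial>gw_space p X)"
      by (rule nn_integral_sum) (intro borel_measurable_times_ennreal measurable_const borel_measurable_sum measF, simp)
    also have "\<dots> = (\<Sum>k\<in>{1..n}. ennreal (m^k) * (\<Sum>vw\<in>Pk K n k. \<integral>\<^sup>+\<omega>. ennreal (?F k \<omega> vw) \<partial>gw_space p X))"
      by (intro sum.cong refl) (simp add: nn_integral_cmult nn_integral_sum measF borel_measurable_sum)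
    finally show ?thesis by (simp add: termE)
  qed
  also have "\<dots> = ennreal (\<Sum>k\<in>{1..n}. m^k * (E * Pi2 p K n k))"
    unfolding Pi2_def using m E0
    by (simp add: sum_ennreal PV_nonneg sum_nonneg ennreal_mult[symmetric] sum_distrib_left)
  finally show ?thesis unfolding E_def .
qed



lemma cond_bound:
  assumes xi: "\<And>u. 0 < xi u" and m: "0 < m" and n: "1 \<le> n"
  shows "0 \<le> Wt N xi m K n"
    and "(Zt N K n)^2 / Wt N xi m K n \<le> eff_conductance N (\<lambda>u. m ^ length u * xi u) n"
    and "Wt N xi m K n = 0 \<Longrightarrow> Zt N K n = 0"
proof -
  let ?S = "{f :: nat list \<Rightarrow> real. f [] = 1 \<and> (\<forall>u\<in>gw_tree N. length u = n \<longrightarrow> f u = 0)}"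
  let ?en = "\<lambda>f. \<Sum>u\<in>{u\<in>gw_tree N. 1 \<le> length u \<and> length u \<le> n}. (f u - f (butlast u))^2 / (m ^ length u * xi u)"
  have en0: "0 \<le> ?en f" for f using xi m by (intro sum_nonneg divide_nonneg_pos) auto
  define f0 where "f0 = (\<lambda>u::nat list. if u = [] then 1 else 0 :: real)"
  have f0S: "f0 \<in> ?S" using n by (auto simp: f0_def)
  have key: "(Zt N K n)^2 \<le> ?en f * Wt N xi m K n" if "f \<in> ?S" for f
    using det_bound[OF xi m, of f N n K] that by auto
  show W0: "0 \<le> Wt N xi m K n"
    unfolding Wt_eq using xi m by (intro sum_nonneg mult_nonneg_nonneg) (auto intro: less_imp_le)
  show "Wt N xi m K n = 0 \<Longrightarrow> Zt N K n = 0"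
    using key[OF f0S] by simp
  show "(Zt N K n)^2 / Wt N xi m K n \<le> eff_conductance N (\<lambda>u. m ^ length u * xi u) n"
    unfolding eff_conductance_def
  proof (rule cINF_greatest)
    show "?S \<noteq> {}" using f0S by blast
    fix f assume f: "f \<in> ?S"
    show "(Zt N K n)^2 / Wt N xi m K n \<le> ?en f"
    proof (cases "Wt N xi m K n = 0")
      case True then show ?thesis using en0 by simp
    next
      case False
      then have "0 < Wt N xi m K n" using W0 by simp
      then show ?thesis using key[OF f] by (simp add: pos_divide_le_eq)
    qed
  qed
qed

lemma amgm:
  fixes Z W t :: real
  assumes "0 < t" "0 < W"
  shows "Z \<le> t / 2 * (Z^2 / W) + 1 / (2 * t) * W"
proof -
  have "0 \<le> (t * Z - W)^2" by simp
  then have "2 * t * W * Z \<le> t^2 * Z^2 + W^2" by (simp add: power2_eq_square algebra_simps)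
  moreover have "(2 * t * W) * (t / 2 * (Z^2 / W) + 1 / (2 * t) * W) = t^2 * Z^2 + W^2"
    using assms by (simp add: field_simps power2_eq_square)
  ultimately have "(2 * t * W) * Z \<le> (2 * t * W) * (t / 2 * (Z^2 / W) + 1 / (2 * t) * W)"
    by (simp add: mult.assoc mult.commute mult.left_commute)
  then show ?thesis using assms by (simp add: mult_le_cancel_left_pos)
qed



theorem lemma3p3:
  fixes p :: "nat pmf" and X :: "real measure"
  assumes "pmf p 0 = 0"
    and "integrable (measure_pmf p) real"
    and "offspring_mean p > 1"
    and "prob_space X" and "sets X = sets borel"
    and "AE x in X. 0 < x"
    and "integrable X (\<lambda>x. x)" and "0 < integral\<^sup>L X (\<lambda>x. x)"
    and "integrable (measure_pmf p) (\<lambda>k. (real k)^2)"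
  shows "\<exists>c>0. \<forall>n\<ge>1. ennreal (c / real n) \<le> (\<integral>\<^sup>+ \<omega>. ennreal (gw_conductance p n \<omega>) \<partial>gw_space p X)"
proof -
  note intm = assms(2) and m1' = assms(3) and X = assms(4,5) and pos = assms(6) and intX = assms(7)
    and E0' = assms(8) and int2 = assms(9)
  define m where "m = offspring_mean p"
  define E where "E = integral\<^sup>L X (\<lambda>x. x)"
  define s where "s = measure_pmf.expectation p (\<lambda>k. (real k)^2)"
  define C where "C = 1 + s / (m * (m - 1))"
  have m1: "1 < m" using m1' by (simp add: m_def)
  have E0: "0 < E" using E0' by (simp add: E_def)
  have s0: "0 \<le> s" unfolding s_def by (rule integral_nonneg_AE) simp
  have C1: "1 \<le> C" unfolding C_def using s0 m1 by (simp add: divide_nonneg_pos)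
  define cc where "cc = 1 / (4 * C * E)"
  have cc0: "0 < cc" using C1 E0 by (simp add: cc_def)
  have good: "AE \<omega> in gw_space p X. \<forall>u. 0 < snd (\<omega> u)"
  proof -
    interpret X: prob_space X by (rule X(1))
    interpret PP: pair_sigma_finite "measure_pmf p" X by unfold_locales
    have P: "prob_space (measure_pmf p \<Otimes>\<^sub>M X)"
      by (intro prob_space_pair) (auto simp: measure_pmf.prob_space_axioms X(1))
    interpret PS: product_prob_space "\<lambda>_. measure_pmf p \<Otimes>\<^sub>M X" UNIV
      using P unfolding product_prob_space_def product_prob_space_axioms_def product_sigma_finite_def
      by (auto simp: prob_space_imp_sigma_finite)
    have sX: "(\<lambda>x. x) \<in> borel_measurable X" by (simp add: measurable_cong_sets[OF X(2) refl])
    have "AE z in measure_pmf p \<Otimes>\<^sub>M X. 0 < snd z"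
    proof (rule PP.AE_pair_measure)
      show "{x \<in> space (measure_pmf p \<Otimes>\<^sub>M X). 0 < snd x} \<in> sets (measure_pmf p \<Otimes>\<^sub>M X)"
        using sX by measurable
      show "AE x in measure_pmf p. AE y in X. 0 < snd (x, y)" using pos by simp
    qed
    then have "\<And>u. AE \<omega> in gw_space p X. 0 < snd (\<omega> u)"
      unfolding gw_space_def by (intro PS.AE_component) auto
    then show ?thesis by (simp add: AE_all_countable)
  qed
  show ?thesis
  proof (intro exI[of _ cc] conjI allI impI cc0)
    fix n :: nat assume n: "1 \<le> n"
    have mn0: "0 < m^n" using m1 by simp
    have "(\<lambda>K. mK p K ^ n) \<longlonglongrightarrow> m^n" unfolding m_def by (intro tendsto_power mK_lim intm)
    moreover have "m^n / 2 < m^n" using mn0 by simp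
    ultimately have "eventually (\<lambda>K. m^n / 2 < mK p K ^ n) sequentially" by (rule order_tendstoD(1))
    then obtain K where K: "m^n / 2 < mK p K ^ n" by (auto simp: eventually_sequentially)
    define A where "A = mK p K ^ n"
    define B where "B = real n * E * C * m^(2*n)"
    have A0: "0 < A" using K mn0 by (simp add: A_def)
    have B0: "0 < B" using n E0 C1 m1 by (simp add: B_def)
    define t where "t = B / A"
    have t0: "0 < t" using A0 B0 by (simp add: t_def)
    define Z where "Z \<omega> = Zt (\<lambda>u. fst (\<omega> u)) K n" for \<omega> :: "nat list \<Rightarrow> nat \<times> real"
    define W where "W \<omega> = Wt (\<lambda>u. fst (\<omega> u)) (\<lambda>u. max (snd (\<omega> u)) 0) m K n" for \<omega> :: "nat list \<Rightarrow> nat \<times> real"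
    define h where "h \<omega> = (Z \<omega>)^2 / W \<omega>" for \<omega>
    have mZ: "Z \<in> borel_measurable (gw_space p X)"
      unfolding Z_def[abs_def] Zt_def by (intro borel_measurable_sum meas_indN)
    have mW: "W \<in> borel_measurable (gw_space p X)"
      unfolding W_def[abs_def] Wt_def
      by (intro borel_measurable_sum borel_measurable_times measurable_const meas_indN
          meas_snd_real[OF X(2)]) measurable
    have mh: "h \<in> borel_measurable (gw_space p X)"
      unfolding h_def[abs_def] power2_eq_square by (intro borel_measurable_divide borel_measurable_times mZ mW)
    have EZ': "(\<integral>\<^sup>+\<omega>. ennreal (Z \<omega>) \<partial>gw_space p X) = ennreal A"
      unfolding Z_def A_def by (rule EZ[OF X])
    have EW': "(\<integral>\<^sup>+\<omega>. ennreal (W \<omega>) \<partial>gw_space p X) \<le> ennreal B"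
    proof -
      have "(\<integral>\<^sup>+\<omega>. ennreal (W \<omega>) \<partial>gw_space p X) = ennreal (\<Sum>k\<in>{1..n}. m^k * (E * Pi2 p K n k))"
        unfolding W_def E_def by (rule EW[OF X pos intX]) (use m1 in simp)
      also have "(\<Sum>k\<in>{1..n}. m^k * (E * Pi2 p K n k)) \<le> real (card {1..n}) * (E * C * m^(2*n))"
      proof (rule sum_bounded_above)
        fix k assume k: "k \<in> {1..n}"
        have "Pi2 p K n k = mK p K ^ k * Pi2 p K (n - k) 0" using k by (intro Pi2_shift) simp
        also have "\<dots> \<le> m^k * (C * m^(2 * (n - k)))"
        proof (rule mult_mono)
          show "mK p K ^ k \<le> m ^ k" unfolding m_def by (intro power_mono mK_le mK_nonneg intm)
          show "Pi2 p K (n - k) 0 \<le> C * m ^ (2 * (n - k))" unfolding C_def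
            by (rule Pi2_bound0[OF m1 mK_nonneg _ sK_nonneg]) (auto simp: m_def s_def intro: mK_le sK_le intm int2)
        qed (use m1 C1 in \<open>auto simp: Pi2_def intro!: sum_nonneg PV_nonneg\<close>)
        finally have "Pi2 p K n k \<le> m^k * (C * m^(2 * (n - k)))" .
        then have "m^k * (E * Pi2 p K n k) \<le> m^k * (E * (m^k * (C * m^(2 * (n - k)))))"
          using m1 E0 by (intro mult_left_mono) auto
        also have "\<dots> = E * C * m^(k + k + 2 * (n - k))" by (simp only: power_add) (simp add: ac_simps)
        also have "k + k + 2 * (n - k) = 2 * n" using k by auto
        finally show "m^k * (E * Pi2 p K n k) \<le> E * C * m^(2*n)" .
      qed
      also have "\<dots> = B" by (simp add: B_def)
      finally show ?thesis by (simp add: ennreal_leI)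
    qed
    have pw: "AE \<omega> in gw_space p X. ennreal (Z \<omega>) \<le> ennreal (t / 2) * ennreal (h \<omega>) + ennreal (1 / (2 * t)) * ennreal (W \<omega>)
              \<and> ennreal (h \<omega>) \<le> ennreal (gw_conductance p n \<omega>)"
      using good
    proof (eventually_elim)
      fix \<omega> :: "nat list \<Rightarrow> nat \<times> real" assume g: "\<forall>u. 0 < snd (\<omega> u)"
      have xe: "(\<lambda>u. max (snd (\<omega> u)) 0) = (\<lambda>u. snd (\<omega> u))" proof
        fix u show "max (snd (\<omega> u)) 0 = snd (\<omega> u)" using g[rule_format, of u] by (simp add: max_absorb1)
      qed
      have W_eq: "W \<omega> = Wt (\<lambda>u. fst (\<omega> u)) (\<lambda>u. snd (\<omega> u)) m K n" unfolding W_def xe ..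
      have m0: "0 < m" using m1 by simp
      note cb = cond_bound[of "\<lambda>u. snd (\<omega> u)", OF _ m0 n, of "\<lambda>u. fst (\<omega> u)" K]
      have W0: "0 \<le> W \<omega>" unfolding W_eq using cb(1) g by blast
      have h0: "0 \<le> h \<omega>" unfolding h_def using W0 by simp
      have hc: "h \<omega> \<le> gw_conductance p n \<omega>"
        unfolding h_def W_eq Z_def gw_conductance_def m_def[symmetric] using cb(2) g by blast
      have "Z \<omega> \<le> t / 2 * h \<omega> + 1 / (2 * t) * W \<omega>"
      proof (cases "W \<omega> = 0")
        case True
        then have "Z \<omega> = 0" unfolding W_eq Z_def using cb(3) g by blast
        then show ?thesis using True by (simp add: h_def)
      next
        case False
        then show ?thesis unfolding h_def using amgm[OF t0, of "W \<omega>" "Z \<omega>"] W0 by simp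
      qed
      then have "ennreal (Z \<omega>) \<le> ennreal (t / 2 * h \<omega> + 1 / (2 * t) * W \<omega>)" by (rule ennreal_leI)
      also have "\<dots> = ennreal (t / 2 * h \<omega>) + ennreal (1 / (2 * t) * W \<omega>)"
        using t0 h0 W0 by (intro ennreal_plus) auto
      also have "\<dots> = ennreal (t / 2) * ennreal (h \<omega>) + ennreal (1 / (2 * t)) * ennreal (W \<omega>)"
      proof -
        have e1: "ennreal (t / 2 * h \<omega>) = ennreal (t / 2) * ennreal (h \<omega>)" using t0 h0 by (intro ennreal_mult) auto
        have e2: "ennreal (1 / (2 * t) * W \<omega>) = ennreal (1 / (2 * t)) * ennreal (W \<omega>)" using t0 W0 by (intro ennreal_mult) auto
        show ?thesis unfolding e1 e2 ..
      qed
      finally show "ennreal (Z \<omega>) \<le> ennreal (t / 2) * ennreal (h \<omega>) + ennreal (1 / (2 * t)) * ennreal (W \<omega>)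
              \<and> ennreal (h \<omega>) \<le> ennreal (gw_conductance p n \<omega>)" using hc by (simp add: ennreal_leI)
    qed
    define I where "I = (\<integral>\<^sup>+\<omega>. ennreal (h \<omega>) \<partial>gw_space p X)"
    have mhe: "(\<lambda>\<omega>. ennreal (h \<omega>)) \<in> borel_measurable (gw_space p X)" by (rule measurable_compose[OF mh measurable_ennreal])
    have mWe: "(\<lambda>\<omega>. ennreal (W \<omega>)) \<in> borel_measurable (gw_space p X)" by (rule measurable_compose[OF mW measurable_ennreal])
    have "ennreal A \<le> (\<integral>\<^sup>+\<omega>. ennreal (t / 2) * ennreal (h \<omega>) + ennreal (1 / (2 * t)) * ennreal (W \<omega>) \<partial>gw_space p X)"
      unfolding EZ'[symmetric] by (rule nn_integral_mono_AE) (use pw in \<open>auto elim: AE_mp\<close>)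
    also have "\<dots> = ennreal (t / 2) * I + ennreal (1 / (2 * t)) * (\<integral>\<^sup>+\<omega>. ennreal (W \<omega>) \<partial>gw_space p X)"
      unfolding I_def using mhe mWe by (simp add: nn_integral_add nn_integral_cmult)
    also have "\<dots> \<le> ennreal (t / 2) * I + ennreal (1 / (2 * t)) * ennreal B"
      by (intro add_left_mono mult_left_mono EW') simp
    finally have AI: "ennreal A \<le> ennreal (t / 2) * I + ennreal (1 / (2 * t)) * ennreal B" .
    have "ennreal (cc / real n) \<le> I"
    proof (cases I rule: ennreal_cases)
      case (real r)
      have "ennreal (t / 2) * I + ennreal (1 / (2 * t)) * ennreal B = ennreal (t / 2 * r + 1 / (2 * t) * B)"
      proof -
        have e1: "ennreal (t / 2 * r) = ennreal (t / 2) * ennreal r" using t0 real by (intro ennreal_mult) auto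
        have e2: "ennreal (1 / (2 * t) * B) = ennreal (1 / (2 * t)) * ennreal B" using t0 B0 by (intro ennreal_mult) auto
        have e3: "ennreal (t / 2 * r + 1 / (2 * t) * B) = ennreal (t / 2 * r) + ennreal (1 / (2 * t) * B)"
          using t0 B0 real by (intro ennreal_plus) auto
        show ?thesis unfolding e3 e1 e2 real ..
      qed
      then have "ennreal A \<le> ennreal (t / 2 * r + 1 / (2 * t) * B)"
        using AI by simp
      then have "A \<le> t / 2 * r + 1 / (2 * t) * B"
        using t0 B0 real by (subst ennreal_le_iff[symmetric]) auto
      also have "1 / (2 * t) * B = A / 2" using A0 B0 by (simp add: t_def)
      finally have "A / 2 \<le> t / 2 * r" by simp
      then have "A \<le> B / A * r" by (simp add: t_def)
      then have Ar: "A * A / B \<le> r" using A0 B0 by (simp add: field_simps)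
      have "(m^n / 2) * (m^n / 2) \<le> A * A" using K mn0 by (intro mult_mono) (auto simp: A_def)
      then have "(m^n / 2) * (m^n / 2) / B \<le> A * A / B" using B0 by (intro divide_right_mono) auto
      also have "(m^n / 2) * (m^n / 2) / B = cc / real n"
      proof -
        have mm2: "m^(2*n) = m^n * m^n" by (simp add: mult_2 power_add)
        show ?thesis using mn0 n C1 E0 m1 unfolding B_def cc_def mm2 by (simp add: field_simps)
      qed
      finally have "cc / real n \<le> r" using Ar by simp
      then show ?thesis using real by (simp add: ennreal_leI)
    qed simp
    also have "I \<le> (\<integral>\<^sup>+\<omega>. ennreal (gw_conductance p n \<omega>) \<partial>gw_space p X)"
      unfolding I_def by (rule nn_integral_mono_AE) (use pw in \<open>auto elim: AE_mp\<close>)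
    finally show "ennreal (cc / real n) \<le> (\<integral>\<^sup>+\<omega>. ennreal (gw_conductance p n \<omega>) \<partial>gw_space p X)" .
  qed
qed


end
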